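(* Let $k\geq 3$ be an integer and $\ell\geq 2$ an even integer, and let $G_1^{\{\ell,k\}}$ and $G_2^{\{\ell,k\}}$ be the indistinguishability graphs (for a fixed permutation $\sigma\neq\mathrm{id}$ of $[k]$), with vertices labeled by their names as defined below. Then for every $i\in[k]$ and every $v\in\{(i,1),(i,\ell)\}$, $$N^{3(\ell/2-1)}_{G_1^{\{\ell,k\}}}[v]=N^{3(\ell/2-1)}_{G_2^{\{\ell,k\}}}[v],$$ i.e. the subgraphs induced by the vertices at distance at most $3(\ell/2-1)$ from $v$ coincide (as labeled graphs) in the two graphs.
   Context: Let $[m]=\{1,\dots,m\}$. For a graph $H$, vertex $v$ and $t\geq 0$, $N^t_H[v]$ denotes the subgraph of $H$ induced by $\{u\in V(H):\mathrm{dist}_H(u,v)\leq t\}$. Path of cliques: for permutations $\tau_1,\dots,\tau_{\ell-1}$ of $[k]$, $P(\tau_1,\dots,\tau_{\ell-1})$ has vertex set $[k]\times[\ell]$ and edges $\{(a,i),(b,i)\}$ for $a\neq b$, $i\in[\ell]$, and $\{(a,i),(b,i+1)\}$ for $i\in[\ell-1]$, $a,b\in[k]$, $b\neq\tau_i(a)$. The $k$-edge-gadget transformation: given a graph $G$ and for each edge a chosen ordered pair $(u,v)$, keep all vertices of $G$, delete each edge $\{u,v\}$, and add $k$ new vertices named $(u,v,1),\dots,(u,v,k)$ forming a clique together with edges $\{u,(u,v,j)\}$ for $j=1,\dots,k-1$ and $\{v,(u,v,k)\}$. Indistinguishability graphs: let $G_1=P(\tau_1,\dots,\tau_{\ell-1})$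 with all $\tau_i=\mathrm{id}$, and $G_2=P(\tau_1',\dots,\tau_{\ell-1}')$ with $\tau_i'=\mathrm{id}$ for $i\neq \ell/2$ and $\tau'_{\ell/2}=\sigma$, where $\sigma$ is a fixed permutation of $[k]$ different from the identity. $G_1^{\{\ell,k\}}$ (resp. $G_2^{\{\ell,k\}}$) is obtained from $G_1$ (resp. $G_2$) by the $k$-edge-gadget transformation, where an edge $\{(a,i),(b,i)\}$ with $a<b$ is oriented as $((a,i),(b,i))$ and an edge $\{(a,i),(b,i+1)\}$ is oriented as $((a,i),(b,i+1))$; vertices are labeled by these names ($(a,i)$ for original vertices, $(u,v,j)$ for gadget vertices). *)

theory Defs
  imports "HOL-Combinatorics.Permutations"
begin

datatype vname = Orig "nat \<times> nat" | Gad "nat \<times> nat" "nat \<times> nat" nat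

type_synonym 'a graph = "'a set \<times> 'a set set"

inductive reach :: "'a set set \<Rightarrow> 'a \<Rightarrow> 'a \<Rightarrow> nat \<Rightarrow> bool" for E where
  refl: "reach E u u n"
| step: "reach E u w n \<Longrightarrow> {w, x} \<in> E \<Longrightarrow> reach E u x (Suc n)"

definition closed_nbhd :: "'a graph \<Rightarrow> 'a \<Rightarrow> nat \<Rightarrow> 'a graph" where
  "closed_nbhd H v t =
     (let S = {u \<in> fst H. reach (snd H) v u t}
      in (S, {e \<in> snd H. e \<subseteq> S}))"

definition poc_vertices :: "nat \<Rightarrow> nat \<Rightarrow> (nat \<times> nat) set" where
  "poc_vertices k l = {1..k} \<times> {1..l}"

definition poc_arcs :: "nat \<Rightarrow> nat \<Rightarrow> (nat \<Rightarrow> nat \<Rightarrow> nat) \<Rightarrow> ((nat \<times> nat) \<times> (nat \<times> nat)) set" where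
  "poc_arcs k l \<tau> =
     {((a,i),(b,i)) | a b i. 1 \<le> a \<and> a < b \<and> b \<le> k \<and> 1 \<le> i \<and> i \<le> l}
   \<union> {((a,i),(b,Suc i)) | a b i. 1 \<le> a \<and> a \<le> k \<and> 1 \<le> b \<and> b \<le> k \<and> 1 \<le> i \<and> i < l
                                 \<and> b \<noteq> \<tau> i a}"

definition path_of_cliques :: "nat \<Rightarrow> nat \<Rightarrow> (nat \<Rightarrow> nat \<Rightarrow> nat) \<Rightarrow> (nat \<times> nat) graph" where
  "path_of_cliques k l \<tau> = (poc_vertices k l, {{x, y} | x y. (x, y) \<in> poc_arcs k l \<tau>})"

definition edge_gadget :: "nat \<Rightarrow> (nat \<times> nat) set \<Rightarrow> ((nat \<times> nat) \<times> (nat \<times> nat)) set \<Rightarrow> vname graph" where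
  "edge_gadget k V D =
     (Orig ` V \<union> {Gad u v j | u v j. (u, v) \<in> D \<and> 1 \<le> j \<and> j \<le> k},
      {{Gad u v j, Gad u v j'} | u v j j'. (u, v) \<in> D \<and> 1 \<le> j \<and> j \<le> k \<and> 1 \<le> j' \<and> j' \<le> k \<and> j \<noteq> j'}
      \<union> {{Orig u, Gad u v j} | u v j. (u, v) \<in> D \<and> 1 \<le> j \<and> j \<le> k - 1}
      \<union> {{Orig v, Gad u v k} | u v. (u, v) \<in> D})"

definition G1 :: "nat \<Rightarrow> nat \<Rightarrow> vname graph" where
  "G1 l k = edge_gadget k (poc_vertices k l) (poc_arcs k l (\<lambda>i. id))"

definition G2 :: "nat \<Rightarrow> nat \<Rightarrow> (nat \<Rightarrow> nat) \<Rightarrow> vname graph" where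
  "G2 l k \<sigma> = edge_gadget k (poc_vertices k l)
                  (poc_arcs k l (\<lambda>i. if i = l div 2 then \<sigma> else id))"

end

theory Submission imports Defs begin

lemma reach_transfer:
  fixes f :: "'a \<Rightarrow> nat" and t n :: nat
  assumes e1: "\<And>x y. {x,y} \<in> E1 \<Longrightarrow> f y \<le> f x + (1::nat)"
    and ag: "\<And>e. \<forall>x\<in>e. f x \<le> t \<Longrightarrow> e \<in> E1 \<Longrightarrow> e \<in> E2"
    and fv: "f v = 0"
  shows "reach E1 a u n \<Longrightarrow> a = v \<Longrightarrow> n \<le> t \<Longrightarrow> reach E2 v u n \<and> f u \<le> n"
proof (induction rule: reach.induct)
  case (refl n) then show ?case using fv by (auto intro: reach.refl)
next
  case (step a w n x)
  then have h: "reach E2 v w n" "f w \<le> n" by auto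
  have fx: "f x \<le> Suc n" using e1[OF step(2)] h by simp
  have "{w,x} \<in> E2" using ag[OF _ step(2)] fx h step(5) by auto
  then show ?case using h fx by (auto intro: reach.step)
qed

lemma nbhd_eq:
  assumes e1: "\<And>x y. {x,y} \<in> E1 \<Longrightarrow> f y \<le> f x + (1::nat)"
    and e2: "\<And>x y. {x,y} \<in> E2 \<Longrightarrow> f y \<le> f x + (1::nat)"
    and ag1: "\<And>e. \<forall>x\<in>e. f x \<le> t \<Longrightarrow> e \<in> E1 \<Longrightarrow> e \<in> E2"
    and ag2: "\<And>e. \<forall>x\<in>e. f x \<le> t \<Longrightarrow> e \<in> E2 \<Longrightarrow> e \<in> E1"
    and vg1: "\<And>x. f x \<le> t \<Longrightarrow> x \<in> V1 \<Longrightarrow> x \<in> V2"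
    and vg2: "\<And>x. f x \<le> t \<Longrightarrow> x \<in> V2 \<Longrightarrow> x \<in> V1"
    and fv: "f v = 0"
  shows "closed_nbhd (V1,E1) v t = closed_nbhd (V2,E2) v t"
proof -
  have r1: "reach E1 v u t \<Longrightarrow> reach E2 v u t \<and> f u \<le> t" for u
    using reach_transfer[of E1 f t E2 v v u t, OF e1 ag1 fv] by auto
  have r2: "reach E2 v u t \<Longrightarrow> reach E1 v u t \<and> f u \<le> t" for u
    using reach_transfer[of E2 f t E1 v v u t, OF e2 ag2 fv] by auto
  have S: "{u \<in> V1. reach E1 v u t} = {u \<in> V2. reach E2 v u t}"
  proof (rule set_eqI, rule iffI)
    fix u assume "u \<in> {u \<in> V1. reach E1 v u t}"
    then show "u \<in> {u \<in> V2. reach E2 v u t}" using r1[of u] vg1[of u] by blast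
  next
    fix u assume "u \<in> {u \<in> V2. reach E2 v u t}"
    then show "u \<in> {u \<in> V1. reach E1 v u t}" using r2[of u] vg2[of u] by blast
  qed
  have F: "\<forall>x\<in>e. f x \<le> t" if "e \<subseteq> {u \<in> V2. reach E2 v u t}" for e
  proof
    fix x assume "x \<in> e"
    then have "reach E2 v x t" using that by blast
    then show "f x \<le> t" using r2 by blast
  qed
  have E: "{e \<in> E1. e \<subseteq> {u \<in> V2. reach E2 v u t}} = {e \<in> E2. e \<subseteq> {u \<in> V2. reach E2 v u t}}"
  proof (rule set_eqI, rule iffI)
    fix e assume "e \<in> {e \<in> E1. e \<subseteq> {u \<in> V2. reach E2 v u t}}"
    then show "e \<in> {e \<in> E2. e \<subseteq> {u \<in> V2. reach E2 v u t}}" using F[of e] ag1[of e] by blast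
  next
    fix e assume "e \<in> {e \<in> E2. e \<subseteq> {u \<in> V2. reach E2 v u t}}"
    then show "e \<in> {e \<in> E1. e \<subseteq> {u \<in> V2. reach E2 v u t}}" using F[of e] ag2[of e] by blast
  qed
  show ?thesis unfolding closed_nbhd_def Let_def fst_conv snd_conv S E ..
qed

definition f1 :: "nat \<Rightarrow> vname \<Rightarrow> nat" where
  "f1 k x = (case x of Orig u \<Rightarrow> 3 * (snd u - 1)
     | Gad u w j \<Rightarrow> (if snd w = Suc (snd u) \<and> j = k then 3 * (snd u - 1) + 2 else 3 * (snd u - 1) + 1))"

definition f2 :: "nat \<Rightarrow> nat \<Rightarrow> vname \<Rightarrow> nat" where
  "f2 l k x = (case x of Orig u \<Rightarrow> 3 * (l - snd u)
     | Gad u w j \<Rightarrow> (if snd w = Suc (snd u) then (if j = k then 3 * (l - snd w) + 1 else 3 * (l - snd w) + 2)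
                    else 3 * (l - snd u) + 1))"

lemma arcs_shape: "(u,w) \<in> poc_arcs k l \<tau> \<Longrightarrow> 1 \<le> snd u \<and> snd u \<le> l \<and> (snd w = snd u \<or> (snd w = Suc (snd u) \<and> snd w \<le> l))"
  unfolding poc_arcs_def by auto

lemma edge_cases:
  assumes "{x,y} \<in> snd (edge_gadget k V D)"
  obtains u w j j' where "(u,w) \<in> D" "1 \<le> j" "j \<le> k" "1 \<le> j'" "j' \<le> k" "j \<noteq> j'" "{x,y} = {Gad u w j, Gad u w j'}"
  | u w j where "(u,w) \<in> D" "1 \<le> j" "j \<le> k - 1" "{x,y} = {Orig u, Gad u w j}"
  | u w where "(u,w) \<in> D" "{x,y} = {Orig w, Gad u w k}"
  using assms unfolding edge_gadget_def by auto

lemma f1_edge: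
  assumes "k \<ge> 3" "{x,y} \<in> snd (edge_gadget k V (poc_arcs k l \<tau>))"
  shows "f1 k y \<le> f1 k x + 1"
  using assms(2)
proof (cases rule: edge_cases)
  case (1 u w j j')
  then show ?thesis using arcs_shape[OF 1(1)] by (auto simp: doubleton_eq_iff f1_def)
next
  case (2 u w j)
  then show ?thesis using arcs_shape[OF 2(1)] assms(1) by (auto simp: doubleton_eq_iff f1_def)
next
  case (3 u w)
  then show ?thesis using arcs_shape[OF 3(1)] assms(1) by (auto simp: doubleton_eq_iff f1_def)
qed

lemma f2_edge:
  assumes "k \<ge> 3" "{x,y} \<in> snd (edge_gadget k V (poc_arcs k l \<tau>))"
  shows "f2 l k y \<le> f2 l k x + 1"
  using assms(2)
proof (cases rule: edge_cases)
  case (1 u w j j')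
  then show ?thesis using arcs_shape[OF 1(1)] by (auto simp: doubleton_eq_iff f2_def)
next
  case (2 u w j)
  then show ?thesis using arcs_shape[OF 2(1)] assms(1) by (auto simp: doubleton_eq_iff f2_def)
next
  case (3 u w)
  then show ?thesis using arcs_shape[OF 3(1)] assms(1) by (auto simp: doubleton_eq_iff f2_def)
qed

lemma gadget_agree:
  assumes h: "\<And>u w j. f (Gad u w j) \<le> t \<Longrightarrow> (u,w) \<in> D1 \<Longrightarrow> (u,w) \<in> D2"
  shows "\<And>x. f x \<le> t \<Longrightarrow> x \<in> fst (edge_gadget k V D1) \<Longrightarrow> x \<in> fst (edge_gadget k V D2)"
    and "\<And>e. \<forall>x\<in>e. f x \<le> t \<Longrightarrow> e \<in> snd (edge_gadget k V D1) \<Longrightarrow> e \<in> snd (edge_gadget k V D2)"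
proof -
  fix x assume fx: "f x \<le> t" and x: "x \<in> fst (edge_gadget k V D1)"
  from x have "x \<in> Orig ` V \<or> (\<exists>u w j. x = Gad u w j \<and> (u,w) \<in> D1 \<and> 1 \<le> j \<and> j \<le> k)"
    unfolding edge_gadget_def by simp
  then show "x \<in> fst (edge_gadget k V D2)"
  proof
    assume "x \<in> Orig ` V" then show ?thesis unfolding edge_gadget_def by simp
  next
    assume "\<exists>u w j. x = Gad u w j \<and> (u,w) \<in> D1 \<and> 1 \<le> j \<and> j \<le> k"
    then obtain u w j where "x = Gad u w j" "(u,w) \<in> D1" "1 \<le> j" "j \<le> k" by blast
    note uw = this
    then have "(u,w) \<in> D2" using h[of u w j] fx by simp
    then have "x \<in> {Gad u v j |u v j. (u, v) \<in> D2 \<and> 1 \<le> j \<and> j \<le> k}" using uw by blast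
    then show ?thesis unfolding edge_gadget_def fst_conv by blast
  qed
next
  fix e assume fe: "\<forall>x\<in>e. f x \<le> t" and e: "e \<in> snd (edge_gadget k V D1)"
  from e have
    "(\<exists>u w j j'. e = {Gad u w j, Gad u w j'} \<and> (u, w) \<in> D1 \<and> 1 \<le> j \<and> j \<le> k \<and> 1 \<le> j' \<and> j' \<le> k \<and> j \<noteq> j')
     \<or> (\<exists>u w j. e = {Orig u, Gad u w j} \<and> (u, w) \<in> D1 \<and> 1 \<le> j \<and> j \<le> k - 1)
     \<or> (\<exists>u w. e = {Orig w, Gad u w k} \<and> (u, w) \<in> D1)"
    unfolding edge_gadget_def snd_conv by blast
  then show "e \<in> snd (edge_gadget k V D2)"
  proof (elim disjE exE conjE)
    fix u w j j' assume a: "e = {Gad u w j, Gad u w j'}" "(u, w) \<in> D1" "1 \<le> j" "j \<le> k" "1 \<le> j'" "j' \<le> k" "j \<noteq> j'"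
    then have "(u,w) \<in> D2" using h[of u w j] fe by simp
    then show ?thesis unfolding edge_gadget_def snd_conv using a by blast
  next
    fix u w j assume a: "e = {Orig u, Gad u w j}" "(u, w) \<in> D1" "1 \<le> j" "j \<le> k - 1"
    then have "(u,w) \<in> D2" using h[of u w j] fe by simp
    then show ?thesis unfolding edge_gadget_def snd_conv using a by blast
  next
    fix u w assume a: "e = {Orig w, Gad u w k}" "(u, w) \<in> D1"
    then have "(u,w) \<in> D2" using h[of u w k] fe by simp
    then show ?thesis unfolding edge_gadget_def snd_conv using a by blast
  qed
qed

lemma arc_agree0:
  assumes "\<not> (p = m \<and> q = Suc m)"
  shows "((a,p),(b,q)) \<in> poc_arcs k l (\<lambda>i. id) \<longleftrightarrow> ((a,p),(b,q)) \<in> poc_arcs k l (\<lambda>i. if i = m then \<sigma> else id)"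
proof -
  have "q = Suc p \<Longrightarrow> p \<noteq> m" using assms by auto
  then show ?thesis unfolding poc_arcs_def by auto
qed

lemma arc_agree:
  assumes "\<not> (snd u = m \<and> snd w = Suc m)"
  shows "(u,w) \<in> poc_arcs k l (\<lambda>i. id) \<longleftrightarrow> (u,w) \<in> poc_arcs k l (\<lambda>i. if i = m then \<sigma> else id)"
  using arc_agree0[of "snd u" m "snd w" "fst u" "fst w"] assms by simp

theorem fact2:
  fixes k l :: nat and \<sigma> :: "nat \<Rightarrow> nat" and i :: nat and v :: "nat \<times> nat"
  assumes "k \<ge> 3" and "l \<ge> 2" and "even l"
    and "\<sigma> permutes {1..k}" and "\<sigma> \<noteq> id"
    and "i \<in> {1..k}" and "v \<in> {(i, 1), (i, l)}"
  shows "closed_nbhd (G1 l k) (Orig v) (3 * (l div 2 - 1))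
       = closed_nbhd (G2 l k \<sigma>) (Orig v) (3 * (l div 2 - 1))"
proof -
  define m where "m = l div 2"
  define t where "t = 3 * (m - 1)"
  have lm: "l = 2 * m" "m \<ge> 1" using assms(2,3) unfolding m_def by auto
  define D1 where "D1 = poc_arcs k l (\<lambda>i. id)"
  define D2 where "D2 = poc_arcs k l (\<lambda>i. if i = l div 2 then \<sigma> else id)"
  have G: "G1 l k = (fst (edge_gadget k (poc_vertices k l) D1), snd (edge_gadget k (poc_vertices k l) D1))"
          "G2 l k \<sigma> = (fst (edge_gadget k (poc_vertices k l) D2), snd (edge_gadget k (poc_vertices k l) D2))"
    unfolding G1_def G2_def D1_def D2_def by simp_all
  have main: "closed_nbhd (G1 l k) (Orig v) t = closed_nbhd (G2 l k \<sigma>) (Orig v) t"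
    if fe: "\<And>\<tau> x y. {x,y} \<in> snd (edge_gadget k (poc_vertices k l) (poc_arcs k l \<tau>)) \<Longrightarrow> f y \<le> f x + 1"
    and fg: "\<And>u w j. f (Gad u w j) \<le> t \<Longrightarrow> \<not> (snd u = m \<and> snd w = Suc m)"
    and fv: "f (Orig v) = 0" for f
  proof -
    have a12: "f (Gad u w j) \<le> t \<Longrightarrow> (u,w) \<in> D1 \<Longrightarrow> (u,w) \<in> D2" for u w j
      using fg[of u w j] arc_agree[of u m w k l \<sigma>] unfolding D1_def D2_def m_def by auto
    have a21: "f (Gad u w j) \<le> t \<Longrightarrow> (u,w) \<in> D2 \<Longrightarrow> (u,w) \<in> D1" for u w j
      using fg[of u w j] arc_agree[of u m w k l \<sigma>] unfolding D1_def D2_def m_def by auto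
    show ?thesis unfolding G
      apply (rule nbhd_eq[where f=f])
      subgoal unfolding D1_def using fe by blast
      subgoal unfolding D2_def using fe by blast
      subgoal by (rule gadget_agree(2)[OF a12])
      subgoal by (rule gadget_agree(2)[OF a21])
      subgoal by (rule gadget_agree(1)[OF a12])
      subgoal by (rule gadget_agree(1)[OF a21])
      by (rule fv)
  qed
  from assms(7) have "v = (i,1) \<or> v = (i,l)" by auto
  then have "closed_nbhd (G1 l k) (Orig v) t = closed_nbhd (G2 l k \<sigma>) (Orig v) t"
  proof
    assume v: "v = (i,1)"
    show ?thesis
    proof (rule main[where f="f1 k"])
      show "\<And>\<tau> x y. {x,y} \<in> snd (edge_gadget k (poc_vertices k l) (poc_arcs k l \<tau>)) \<Longrightarrow> f1 k y \<le> f1 k x + 1"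
        using f1_edge assms(1) by blast
      show "\<And>u w j. f1 k (Gad u w j) \<le> t \<Longrightarrow> \<not> (snd u = m \<and> snd w = Suc m)"
        unfolding f1_def t_def by (auto split: if_splits)
      show "f1 k (Orig v) = 0" unfolding f1_def v by simp
    qed
  next
    assume v: "v = (i,l)"
    show ?thesis
    proof (rule main[where f="f2 l k"])
      show "\<And>\<tau> x y. {x,y} \<in> snd (edge_gadget k (poc_vertices k l) (poc_arcs k l \<tau>)) \<Longrightarrow> f2 l k y \<le> f2 l k x + 1"
        using f2_edge assms(1) by blast
      show "\<And>u w j. f2 l k (Gad u w j) \<le> t \<Longrightarrow> \<not> (snd u = m \<and> snd w = Suc m)"
        unfolding f2_def t_def using lm by (auto split: if_splits)
      show "f2 l k (Orig v) = 0" unfolding f2_def v by simp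
    qed
  qed
  then show ?thesis by (simp only: t_def m_def)
qed

end
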